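(* Let $X$ be a multiset of nonzero real numbers containing at least one positive and one negative number, and let $T$ be an addition tree over $X$. Let $y_1,\dots,y_{2k}$ be the critical leaves of $T$, indexed so that $y_{2i-1}$ and $y_{2i}$ are siblings, and let $z_1,\dots,z_{n-2k}$ be the noncritical leaves. Let $\Pi=\sum_{i=1}^k|y_{2i-1}+y_{2i}|$ and $\Delta=\sum_{j=1}^{n-2k}|z_j|$. Then $C(T)\ge(\Pi+\Delta)/2$.
   Context: An addition tree over a multiset $X=\{x_1,\dots,x_n\}$ is a full binary tree with $n$ leaves labeled by the elements of $X$ (each used once), each internal node having value equal to the sum of its children's values; $C(T)$ is the sum of the absolute values of the internal node values. A leaf is critical if its sibling is a leaf of the opposite sign (so critical leaves come in sibling pairs). *)

theory Defs
  imports Complex_Main "HOL-Library.Multiset"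
begin

datatype atree = Leaf real | Node atree atree

fun leaves :: "atree \<Rightarrow> real multiset" where
  "leaves (Leaf x) = {#x#}"
| "leaves (Node l r) = leaves l + leaves r"

fun tval :: "atree \<Rightarrow> real" where
  "tval (Leaf x) = x"
| "tval (Node l r) = tval l + tval r"

fun cost :: "atree \<Rightarrow> real" where
  "cost (Leaf x) = 0"
| "cost (Node l r) = \<bar>tval l + tval r\<bar> + cost l + cost r"

(* A node whose two children are leaves of opposite sign: its two leaves are critical *)
fun crit_pair :: "atree \<Rightarrow> bool" where
  "crit_pair (Node (Leaf a) (Leaf b)) = ((a > 0 \<and> b < 0) \<or> (a < 0 \<and> b > 0))"
| "crit_pair _ = False"

fun Pi_sum :: "atree \<Rightarrow> real" where
  "Pi_sum (Leaf x) = 0"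
| "Pi_sum (Node l r) =
     (if crit_pair (Node l r) then \<bar>tval l + tval r\<bar> else Pi_sum l + Pi_sum r)"

fun Delta_sum :: "atree \<Rightarrow> real" where
  "Delta_sum (Leaf x) = \<bar>x\<bar>"
| "Delta_sum (Node l r) = (if crit_pair (Node l r) then 0 else Delta_sum l + Delta_sum r)"

end

theory Submission
  imports Defs
begin

lemma cl: "cost l \<ge> 0" by (induction l) auto

lemma key: "\<exists>a b. T = Node a b \<Longrightarrow> 2 * cost T \<ge> Pi_sum T + Delta_sum T + \<bar>tval T\<bar>"
proof (induction T)
  case (Leaf x)
  then show ?case by simp
next
  case (Node l r)
  show ?case
  proof (cases l)
    case (Leaf a)
    note La = Leaf
    show ?thesis
    proof (cases r)
      case (Leaf b)
      then show ?thesis using La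
        by (cases "(a > 0 \<and> b < 0) \<or> (a < 0 \<and> b > 0)") (auto simp: abs_if split: if_splits)
    next
      case (Node r1 r2)
      have "2 * cost r \<ge> Pi_sum r + Delta_sum r + \<bar>tval r\<bar>" using Node.IH(2) Node by blast
      moreover have "\<bar>a + tval r\<bar> + \<bar>tval r\<bar> \<ge> \<bar>a\<bar>" by linarith
      moreover have nc: "\<not> crit_pair (Node l r)" using Node by simp
      ultimately show ?thesis using La
        by (simp only: cost.simps Pi_sum.simps Delta_sum.simps tval.simps if_False nc) (smt (verit))
    qed
  next
    case (Node l1 l2)
    note Nl = Node
    have hl: "2 * cost l \<ge> Pi_sum l + Delta_sum l + \<bar>tval l\<bar>" using Node.IH(1) Nl by blast
    show ?thesis
    proof (cases r)
      case (Leaf b)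
      have "\<bar>tval l + b\<bar> + \<bar>tval l\<bar> \<ge> \<bar>b\<bar>" by linarith
      moreover have nc: "\<not> crit_pair (Node l r)" using Nl by simp
      ultimately show ?thesis using Leaf hl
        by (simp only: cost.simps Pi_sum.simps Delta_sum.simps tval.simps if_False nc) (smt (verit))
    next
      case (Node r1 r2)
      have "2 * cost r \<ge> Pi_sum r + Delta_sum r + \<bar>tval r\<bar>" using Node.IH(2) Node by blast
      have nc: "\<not> crit_pair (Node l r)" using Nl by simp
      have "\<bar>tval l + tval r\<bar> \<ge> 0" by simp
      then show ?thesis using nc hl \<open>2 * cost r \<ge> _\<close>
        by (simp only: cost.simps(2) Pi_sum.simps(2) Delta_sum.simps(2) tval.simps(2) if_False) (smt (verit))
    qed
  qed
qed

theorem lemma3p1: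
  fixes X :: "real multiset" and T :: atree
  assumes "\<forall>x\<in>#X. x \<noteq> 0"
    and "\<exists>x\<in>#X. x > 0" and "\<exists>x\<in>#X. x < 0"
    and "leaves T = X"
  shows "cost T \<ge> (Pi_sum T + Delta_sum T) / 2"
proof (cases T)
  case (Leaf x)
  then show ?thesis using assms by auto
next
  case (Node l r)
  have "2 * cost T \<ge> Pi_sum T + Delta_sum T + \<bar>tval T\<bar>" using key Node by blast
  moreover have "\<bar>tval T\<bar> \<ge> 0" by simp
  ultimately have "Pi_sum T + Delta_sum T \<le> 2 * cost T" by linarith
  then show ?thesis by (simp add: field_simps)
qed

end
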